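(* Let $P$ be a simplicial poset of rank $n+1$. Then $$\Theta(\Psi(P))=[n]!\cdot h(P),$$ where $h(P)$ is the $h$-polynomial of $P$.
   Context: A graded poset $P$ with minimum $\hat0$, maximum $\hat1$ and rank function $\rho$ is simplicial if for every $x<\hat1$ the interval $[\hat0,x]$ is isomorphic to the Boolean algebra of rank $\rho(x)$. For $P$ of rank $n+1$, let $f_0=1$ and, for $1\le i\le n$, $f_i$ be the number of elements of rank $i$; the $h$-polynomial is $h(P)=\sum_{i=0}^n f_i\, q^i(1-q)^{n-i}$. The $\mathbf{a}\mathbf{b}$-index is $\Psi(P)=\sum_{S\subseteq\{1,\dots,n\}} f_S\, v_S$, where for $S=\{s_1<\cdots<s_k\}$, $f_S$ is the number of chains $\hat0<x_1<\cdots<x_k<\hat1$ with $\rho(x_i)=s_i$, and $v_S=v_1\cdots v_n$ with $v_i=\mathbf{b}$ if $i\in S$, $v_i=\mathbf{a}-\mathbf{b}$ otherwise ($\mathbf{a},\mathbf{b}$ non-commuting variables). The Major MacMahon map $\Theta:\mathbb{Z}\langle\mathbf{a},\mathbf{b}\rangle\to\mathbb{Z}[q]$ is linear with $\Theta(u_1\cdots u_n)=\prod_{i:\,u_i=\mathbf{b}}q^i$ on monomials. $[m]=1+q+\cdots+q^{m-1}$, $[m]!=[m]\cdots[1]$, $[0]!=1$. *)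

theory Defs
  imports "HOL-Computational_Algebra.Polynomial"
begin

definition poset_on :: "'a set \<Rightarrow> ('a \<Rightarrow> 'a \<Rightarrow> bool) \<Rightarrow> bool" where
  "poset_on X le \<longleftrightarrow>
     (\<forall>x\<in>X. le x x) \<and>
     (\<forall>x\<in>X. \<forall>y\<in>X. le x y \<and> le y x \<longrightarrow> x = y) \<and>
     (\<forall>x\<in>X. \<forall>y\<in>X. \<forall>z\<in>X. le x y \<and> le y z \<longrightarrow> le x z)"

definition covers :: "'a set \<Rightarrow> ('a \<Rightarrow> 'a \<Rightarrow> bool) \<Rightarrow> 'a \<Rightarrow> 'a \<Rightarrow> bool" where
  "covers X le x y \<longleftrightarrow> x \<in> X \<and> y \<in> X \<and> le x y \<and> x \<noteq> y \<and>
     \<not> (\<exists>z\<in>X. le x z \<and> le z y \<and> z \<noteq> x \<and> z \<noteq> y)"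

definition graded_poset ::
  "'a set \<Rightarrow> ('a \<Rightarrow> 'a \<Rightarrow> bool) \<Rightarrow> 'a \<Rightarrow> 'a \<Rightarrow> ('a \<Rightarrow> nat) \<Rightarrow> nat \<Rightarrow> bool" where
  "graded_poset X le zero one rho n \<longleftrightarrow>
     finite X \<and> poset_on X le \<and> zero \<in> X \<and> one \<in> X \<and>
     (\<forall>x\<in>X. le zero x \<and> le x one) \<and>
     rho zero = 0 \<and> rho one = n + 1 \<and>
     (\<forall>x y. covers X le x y \<longrightarrow> rho y = rho x + 1)"

definition interval_below :: "'a set \<Rightarrow> ('a \<Rightarrow> 'a \<Rightarrow> bool) \<Rightarrow> 'a \<Rightarrow> 'a \<Rightarrow> 'a set" where
  "interval_below X le zero x = {y\<in>X. le zero y \<and> le y x}"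

definition boolean_interval :: "'a set \<Rightarrow> ('a \<Rightarrow> 'a \<Rightarrow> bool) \<Rightarrow> 'a \<Rightarrow> 'a \<Rightarrow> nat \<Rightarrow> bool" where
  "boolean_interval X le zero x k \<longleftrightarrow>
     (\<exists>f. bij_betw f (interval_below X le zero x) (Pow {..<k}) \<and>
          (\<forall>y\<in>interval_below X le zero x. \<forall>z\<in>interval_below X le zero x.
              le y z \<longleftrightarrow> f y \<subseteq> f z))"

definition simplicial_poset ::
  "'a set \<Rightarrow> ('a \<Rightarrow> 'a \<Rightarrow> bool) \<Rightarrow> 'a \<Rightarrow> 'a \<Rightarrow> ('a \<Rightarrow> nat) \<Rightarrow> nat \<Rightarrow> bool" where
  "simplicial_poset X le zero one rho n \<longleftrightarrow>
     graded_poset X le zero one rho n \<and>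
     (\<forall>x\<in>X. x \<noteq> one \<longrightarrow> boolean_interval X le zero x (rho x))"

definition fvec :: "'a set \<Rightarrow> ('a \<Rightarrow> nat) \<Rightarrow> nat \<Rightarrow> nat" where
  "fvec X rho i = (if i = 0 then 1 else card {x\<in>X. rho x = i})"

definition hpoly :: "'a set \<Rightarrow> ('a \<Rightarrow> nat) \<Rightarrow> nat \<Rightarrow> int poly" where
  "hpoly X rho n = (\<Sum>i=0..n. of_nat (fvec X rho i) * [:0,1:] ^ i * [:1,-1:] ^ (n - i))"

text \<open>Number of chains \<open>\<hat>0 < x_1 < \<dots> < x_k < \<hat>1\<close> with \<open>\<rho>(x_i) = s_i\<close>, counted
  as the sets \<open>{x_1,\<dots>,x_k}\<close> (a chain with distinct ranks is determined by its set).\<close>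
definition flag_f :: "'a set \<Rightarrow> ('a \<Rightarrow> 'a \<Rightarrow> bool) \<Rightarrow> 'a \<Rightarrow> 'a \<Rightarrow> ('a \<Rightarrow> nat) \<Rightarrow> nat set \<Rightarrow> nat" where
  "flag_f X le zero one rho S = card {C. C \<subseteq> X - {zero, one} \<and>
       (\<forall>x\<in>C. \<forall>y\<in>C. le x y \<or> le y x) \<and> rho ` C = S \<and> card C = card S}"

text \<open>An element of \<open>\<int>\<langle>a,b\<rangle>\<close> is a coefficient function on words; letter False = a,
  True = b.\<close>
type_synonym abpoly = "bool list \<Rightarrow> int"

definition ab_one :: abpoly where "ab_one w = (if w = [] then 1 else 0)"
definition ab_a :: abpoly where "ab_a w = (if w = [False] then 1 else 0)"
definition ab_b :: abpoly where "ab_b w = (if w = [True] then 1 else 0)"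
definition ab_minus :: "abpoly \<Rightarrow> abpoly \<Rightarrow> abpoly" where "ab_minus p r w = p w - r w"
definition ab_mult :: "abpoly \<Rightarrow> abpoly \<Rightarrow> abpoly" where
  "ab_mult p r w = (\<Sum>i\<le>length w. p (take i w) * r (drop i w))"
definition ab_prod :: "abpoly list \<Rightarrow> abpoly" where
  "ab_prod ps = foldr ab_mult ps ab_one"

definition vS :: "nat \<Rightarrow> nat set \<Rightarrow> abpoly" where
  "vS n S = ab_prod (map (\<lambda>i. if i \<in> S then ab_b else ab_minus ab_a ab_b) [1..<n+1])"

definition abindex ::
  "'a set \<Rightarrow> ('a \<Rightarrow> 'a \<Rightarrow> bool) \<Rightarrow> 'a \<Rightarrow> 'a \<Rightarrow> ('a \<Rightarrow> nat) \<Rightarrow> nat \<Rightarrow> abpoly" where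
  "abindex X le zero one rho n =
     (\<lambda>w. \<Sum>S\<in>Pow {1..n}. int (flag_f X le zero one rho S) * vS n S w)"

text \<open>Major MacMahon map: linear, monomial \<open>u_1\<cdots>u_m \<mapsto> \<Prod>_{u_i = b} q^i\<close> (1-based positions).
  Applied to finitely supported coefficient functions.\<close>
definition Theta :: "abpoly \<Rightarrow> int poly" where
  "Theta p = (\<Sum>w\<in>{w. p w \<noteq> 0}.
      smult (p w) (monom 1 (\<Sum>i\<in>{i. i < length w \<and> w ! i}. i + 1)))"

definition qint :: "nat \<Rightarrow> int poly" where "qint m = (\<Sum>j<m. monom 1 j)"
definition qfact :: "nat \<Rightarrow> int poly" where "qfact m = (\<Prod>j=1..m. qint j)"

end

theory Submission
  imports Defs
begin


definition qq :: "int poly" where "qq = [:0,1:]"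

definition W :: "nat \<Rightarrow> nat set \<Rightarrow> int poly" where
  "W n S = (\<Prod>i=1..n. if i \<in> S then qq^i else 1 - qq^i)"

function Nrec :: "nat \<Rightarrow> nat set \<Rightarrow> nat" where
  "Nrec k T = (if T = {} \<or> infinite T then 1 else (k choose Max T) * Nrec (Max T) (T - {Max T}))"
  by auto
termination
  by (relation "measure (\<lambda>(k,T). card T)") (auto simp: card_gt_0_iff)

declare Nrec.simps[simp del]

lemma Nrec_empty[simp]: "Nrec k {} = 1"
  by (simp add: Nrec.simps)

lemma Nrec_insert:
  assumes "finite T" "\<forall>t\<in>T. t < j"
  shows "Nrec k (insert j T) = (k choose j) * Nrec j T"
proof -
  have m: "Max (insert j T) = j" by (rule Max_eqI) (use assms in auto)
  have "insert j T - {j} = T" using assms by auto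
  then show ?thesis using assms m by (subst Nrec.simps) auto
qed

lemma one_minus_qq: "[:1,-1:] = 1 - qq"
  by (simp add: one_pCons qq_def)

lemma qint_Suc: "qint (Suc m) = qint m + qq^m"
  by (simp add: qint_def monom_altdef qq_def)

lemma geo_gen: "(1 - (x::'b::comm_ring_1)) * (\<Sum>j<m. x^j) = 1 - x^m"
  using one_diff_power_eq[of x m] by simp

lemma qint_mult: "(1 - qq) * qint m = 1 - qq^m"
  using geo_gen[of qq m] by (simp add: qint_def monom_altdef qq_def)

lemma qfact_Suc: "qfact (Suc m) = qint (Suc m) * qfact m"
  by (simp add: qfact_def prod.cl_ivl_Suc mult.commute)

lemma qfact_0: "qfact 0 = 1" by (simp add: qfact_def)

lemma W_Suc_notin: "Suc m \<notin> S \<Longrightarrow> W (Suc m) S = W m S * (1 - qq^Suc m)"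
  by (simp add: W_def prod.cl_ivl_Suc)

lemma W_cong_out: "j > m \<Longrightarrow> W m (insert j S) = W m S"
  unfolding W_def by (rule prod.cong) auto

lemma W_Suc_in: "S \<subseteq> {1..m} \<Longrightarrow> W (Suc m) (insert (Suc m) S) = W m S * qq^Suc m"
  by (simp add: W_def prod.cl_ivl_Suc W_cong_out[unfolded W_def])

lemma R:
  fixes F :: "nat set \<Rightarrow> nat" and fv :: "nat \<Rightarrow> nat"
  assumes F0: "F {} = 1" "fv 0 = 1"
  and Fins: "\<And>j T. 1 \<le> j \<Longrightarrow> j \<le> M \<Longrightarrow> T \<subseteq> {1..<j} \<Longrightarrow> F (insert j T) = fv j * Nrec j T"
  and gj: "\<And>j. j < M \<Longrightarrow> (\<Sum>T\<in>Pow {1..j}. of_nat (Nrec (Suc j) T) * W j T) = qfact (Suc j)"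
  shows "m \<le> M \<Longrightarrow> (\<Sum>S\<in>Pow {1..m}. of_nat (F S) * W m S)
        = qfact m * (\<Sum>i=0..m. of_nat (fv i) * qq^i * [:1,-1:]^(m-i))"
proof (induct m)
  case 0
  then show ?case using F0 by (simp add: W_def qfact_0)
next
  case (Suc m)
  have IH: "(\<Sum>S\<in>Pow {1..m}. of_nat (F S) * W m S)
        = qfact m * (\<Sum>i=0..m. of_nat (fv i) * qq^i * [:1,-1:]^(m-i))" using Suc by auto
  have ins: "{1..Suc m} = insert (Suc m) {1..m}" by auto
  have disj: "Pow {1..m} \<inter> insert (Suc m) ` Pow {1..m} = {}" by auto
  have inj: "inj_on (insert (Suc m)) (Pow {1..m})"
    by (rule inj_onI) (metis Pow_iff atLeastAtMost_iff insert_ident not_less_eq_eq order_refl subset_iff)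
  have s1: "(\<Sum>S\<in>Pow {1..m}. of_nat (F S) * W (Suc m) S)
      = (1 - qq^Suc m) * (\<Sum>S\<in>Pow {1..m}. of_nat (F S) * W m S)"
    by (subst sum_distrib_left, rule sum.cong[OF refl], subst W_Suc_notin) (auto simp: algebra_simps)
  have s2: "(\<Sum>S\<in>insert (Suc m) ` Pow {1..m}. of_nat (F S) * W (Suc m) S)
      = of_nat (fv (Suc m)) * qq^Suc m * qfact (Suc m)"
  proof -
    have "(\<Sum>S\<in>insert (Suc m) ` Pow {1..m}. of_nat (F S) * W (Suc m) S)
       = (\<Sum>T\<in>Pow {1..m}. of_nat (F (insert (Suc m) T)) * W (Suc m) (insert (Suc m) T))"
      by (subst sum.reindex[OF inj]) simp
    also have "\<dots> = (\<Sum>T\<in>Pow {1..m}. (of_nat (fv (Suc m)) * qq^Suc m) * (of_nat (Nrec (Suc m) T) * W m T))"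
    proof (rule sum.cong)
      fix T assume T: "T \<in> Pow {1..m}"
      then have "T \<subseteq> {1..<Suc m}" by auto
      then have "F (insert (Suc m) T) = fv (Suc m) * Nrec (Suc m) T"
        using Fins[of "Suc m" T] Suc.prems by auto
      then show "of_nat (F (insert (Suc m) T)) * W (Suc m) (insert (Suc m) T)
          = (of_nat (fv (Suc m)) * qq^Suc m) * (of_nat (Nrec (Suc m) T) * W m T)"
        using T by (simp add: W_Suc_in algebra_simps)
    qed simp
    also have "\<dots> = of_nat (fv (Suc m)) * qq^Suc m * qfact (Suc m)"
      using gj[of m] Suc.prems by (simp add: sum_distrib_left[symmetric])
    finally show ?thesis .
  qed
  have "(\<Sum>S\<in>Pow {1..Suc m}. of_nat (F S) * W (Suc m) S)
     = (\<Sum>S\<in>Pow {1..m}. of_nat (F S) * W (Suc m) S)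
       + (\<Sum>S\<in>insert (Suc m) ` Pow {1..m}. of_nat (F S) * W (Suc m) S)"
    unfolding ins Pow_insert by (rule sum.union_disjoint) (use disj in auto)
  also have "\<dots> = (1 - qq^Suc m) * (qfact m * (\<Sum>i=0..m. of_nat (fv i) * qq^i * [:1,-1:]^(m-i)))
      + of_nat (fv (Suc m)) * qq^Suc m * qfact (Suc m)"
    using s1 s2 IH by simp
  also have "\<dots> = qfact (Suc m) * (\<Sum>i=0..Suc m. of_nat (fv i) * qq^i * [:1,-1:]^(Suc m-i))"
  proof -
    have a: "(\<Sum>i=0..Suc m. of_nat (fv i) * qq^i * [:1,-1:]^(Suc m-i))
        = (1 - qq) * (\<Sum>i=0..m. of_nat (fv i) * qq^i * [:1,-1:]^(m-i)) + of_nat (fv (Suc m)) * qq^Suc m"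
      by (simp add: sum_distrib_left one_minus_qq Suc_diff_le algebra_simps)
    show ?thesis
      unfolding a qfact_Suc qint_mult[symmetric] by (simp add: algebra_simps)
  qed
  finally show ?case .
qed

lemma binom_qint: "(\<Sum>i=0..k. of_nat (Suc k choose i) * qq^i * [:1,-1:]^(k-i)) = qint (Suc k)"
proof -
  have "(1 - qq) * (\<Sum>i=0..k. of_nat (Suc k choose i) * qq^i * [:1,-1:]^(k-i))
      = (\<Sum>i=0..k. of_nat (Suc k choose i) * qq^i * (1 - qq)^(Suc k-i))"
    by (simp add: sum_distrib_left one_minus_qq Suc_diff_le algebra_simps)
  also have "\<dots> = (qq + (1 - qq))^Suc k - qq^Suc k"
    unfolding binomial_ring by (simp add: atLeast0AtMost)
  also have "\<dots> = (1 - qq) * qint (Suc k)" by (simp add: qint_mult)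
  finally have "(1 - qq) * (\<Sum>i=0..k. of_nat (Suc k choose i) * qq^i * [:1,-1:]^(k-i)) = (1 - qq) * qint (Suc k)" .
  moreover have "(1 - qq) \<noteq> 0"
  proof
    assume "(1::int poly) - qq = 0"
    then have "coeff (1 - qq) 1 = 0" by simp
    then show False by (simp add: qq_def)
  qed
  ultimately show ?thesis by simp
qed

lemma g_eq: "(\<Sum>T\<in>Pow {1..k}. of_nat (Nrec (Suc k) T) * W k T) = qfact (Suc k)"
proof (induct k rule: less_induct)
  case (less k)
  have "(\<Sum>T\<in>Pow {1..k}. of_nat (Nrec (Suc k) T) * W k T)
      = qfact k * (\<Sum>i=0..k. of_nat (Suc k choose i) * qq^i * [:1,-1:]^(k-i))"
  proof (rule R[where M=k])
    fix j T assume "1 \<le> j" "j \<le> k" "T \<subseteq> {1..<j}"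
    then show "Nrec (Suc k) (insert j T) = (Suc k choose j) * Nrec j T"
      by (intro Nrec_insert) (auto intro: finite_subset)
  qed (use less in auto)
  then show ?case by (simp add: binom_qint qfact_Suc)
qed



definition lp :: "int \<Rightarrow> int \<Rightarrow> abpoly" where
  "lp a b w = (if w = [False] then a else if w = [True] then b else 0)"

lemma ab_b_lp: "ab_b = lp 0 1"
  by (rule ext) (auto simp: ab_b_def lp_def)

lemma ab_amb_lp: "ab_minus ab_a (lp 0 1) = lp 1 (-1)"
  by (rule ext) (auto simp: ab_a_def ab_minus_def lp_def)

lemma ab_mult_lp_Nil: "ab_mult (lp a b) r [] = 0"
  by (simp add: ab_mult_def lp_def)

lemma ab_mult_lp_Cons: "ab_mult (lp a b) r (x#w) = (if x then b else a) * r w"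
proof -
  have "ab_mult (lp a b) r (x#w) = (\<Sum>i\<le>length (x#w). if i = 1 then (if x then b else a) * r w else 0)"
    unfolding ab_mult_def
  proof (rule sum.cong[OF refl])
    fix i assume i: "i \<in> {..length (x#w)}"
    show "lp a b (take i (x # w)) * r (drop i (x # w)) = (if i = 1 then (if x then b else a) * r w else 0)"
    proof (cases i)
      case 0 then show ?thesis by (simp add: lp_def)
    next
      case (Suc j)
      show ?thesis
      proof (cases j)
        case 0 then show ?thesis using Suc by (simp add: lp_def)
      next
        case (Suc l)
        then have "w \<noteq> []" using i \<open>i = Suc j\<close> by auto
        then obtain y w' where w: "w = y#w'" by (cases w) auto
        show ?thesis using \<open>i = Suc j\<close> Suc by (simp add: lp_def w)
      qed
    qed
  qed
  also have "\<dots> = (if x then b else a) * r w" by (simp only: sum.delta finite_atMost) simp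
  finally show ?thesis .
qed

fun cf :: "(int \<times> int) list \<Rightarrow> bool list \<Rightarrow> int" where
  "cf [] [] = 1"
| "cf ((a,b)#ps) (x#w) = (if x then b else a) * cf ps w"
| "cf _ _ = 0"

lemma cf_len: "cf ps w \<noteq> 0 \<Longrightarrow> length w = length ps"
  by (induct ps w rule: cf.induct) auto

lemma ab_prod_lp: "ab_prod (map (\<lambda>(a,b). lp a b) ps) = cf ps"
proof (induct ps)
  case Nil
  show ?case by (rule ext) (auto simp: ab_prod_def ab_one_def neq_Nil_conv)
next
  case (Cons p ps)
  obtain a b where p: "p = (a,b)" by force
  show ?case
  proof (rule ext)
    fix w show "ab_prod (map (\<lambda>(a, b). lp a b) (p # ps)) w = cf (p # ps) w"
      using Cons by (cases w) (auto simp: p ab_prod_def ab_mult_lp_Nil ab_mult_lp_Cons)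
  qed
qed

fun exw :: "nat \<Rightarrow> bool list \<Rightarrow> nat" where
  "exw k [] = 0"
| "exw k (x#w) = (if x then Suc k else 0) + exw (Suc k) w"

lemma exw_eq: "(\<Sum>i\<in>{i. i < length w \<and> w!i}. i + 1 + k) = exw k w"
proof (induct w arbitrary: k)
  case Nil then show ?case by simp
next
  case (Cons x w)
  have fin: "finite {i. i < length w \<and> w!i}" by simp
  have e: "{i. i < length (x#w) \<and> (x#w)!i} = (if x then insert 0 else id) (Suc ` {i. i < length w \<and> w!i})"
  proof (rule set_eqI)
    fix i show "i \<in> {i. i < length (x#w) \<and> (x#w)!i} \<longleftrightarrow> i \<in> (if x then insert 0 else id) (Suc ` {i. i < length w \<and> w!i})"
      by (cases i) auto
  qed
  have s: "(\<Sum>i\<in>Suc ` {i. i < length w \<and> w!i}. i + 1 + k) = exw (Suc k) w"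
    by (subst sum.reindex) (auto simp: Cons[symmetric])
  show ?case by (subst e, cases x) (use fin s in auto)
qed

fun prodl :: "nat \<Rightarrow> (int \<times> int) list \<Rightarrow> int poly" where
  "prodl k [] = 1"
| "prodl k ((a,b)#ps) = ([:a:] + smult b (qq^Suc k)) * prodl (Suc k) ps"

lemma len_Suc_set: "{w::bool list. length w = Suc m} = (\<lambda>(xs,n). n#xs) ` ({w. length w = m} \<times> UNIV)"
  using lists_length_Suc_eq[of UNIV m] by simp

lemma fin_len: "finite {w::bool list. length w = m}"
  using finite_lists_length_eq[of "UNIV::bool set" m] by simp

lemma sum_bool_aux: "(\<Sum>x\<in>UNIV. smult ((if x then b else a) * (c::int)) (qq ^ ((if x then Suc k else 0) + e)))
   = ([:a:] + smult b (qq^Suc k)) * smult c (qq ^ e)"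
  by (simp add: UNIV_bool power_add algebra_simps)

lemma theta_sum: "(\<Sum>w\<in>{w. length w = length ps}. smult (cf ps w) (qq ^ exw k w)) = prodl k ps"
proof (induct ps arbitrary: k)
  case Nil
  have "{w::bool list. length w = 0} = {[]}" by auto
  then show ?case by simp
next
  case (Cons p ps)
  obtain a b where p: "p = (a,b)" by force
  have inj: "inj_on (\<lambda>(xs,n). n#xs) ({w::bool list. length w = length ps} \<times> UNIV)"
    by (auto intro: inj_onI)
  have "(\<Sum>w\<in>{w. length w = length (p#ps)}. smult (cf (p#ps) w) (qq ^ exw k w))
     = (\<Sum>(w,x)\<in>{w. length w = length ps} \<times> UNIV. smult (cf (p#ps) (x#w)) (qq ^ exw k (x#w)))"
    by (simp only: length_Cons len_Suc_set, subst sum.reindex[OF inj]) (simp add: case_prod_unfold o_def)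
  also have "\<dots> = (\<Sum>w\<in>{w. length w = length ps}. \<Sum>x\<in>UNIV. smult (cf (p#ps) (x#w)) (qq ^ exw k (x#w)))"
    by (simp add: sum.cartesian_product)
  also have "\<dots> = (\<Sum>w\<in>{w. length w = length ps}. ([:a:] + smult b (qq^Suc k)) * smult (cf ps w) (qq ^ exw (Suc k) w))"
    by (rule sum.cong[OF refl]) (simp only: p cf.simps exw.simps sum_bool_aux)
  also have "\<dots> = prodl k (p#ps)"
    by (simp only: p prodl.simps Cons[symmetric] sum_distrib_left)
  finally show ?case .
qed



lemma Theta_finite:
  fixes p :: abpoly and A :: "bool list set"
  assumes "finite A" "{w. p w \<noteq> 0} \<subseteq> A"
  shows "Theta p = (\<Sum>w\<in>A. smult (p w) (qq ^ exw 0 w))"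
proof -
  have m: "monom 1 (\<Sum>i\<in>{i. i < length w \<and> w ! i}. i + 1) = qq ^ exw 0 w" for w
    using exw_eq[where w=w and k=0] by (simp add: monom_altdef qq_def)
  show ?thesis unfolding Theta_def m
    by (rule sum.mono_neutral_left) (use assms in auto)
qed

definition c0 :: "nat set \<Rightarrow> nat \<Rightarrow> int" where "c0 S i = (if i \<in> S then 0 else 1)"
definition c1 :: "nat set \<Rightarrow> nat \<Rightarrow> int" where "c1 S i = (if i \<in> S then 1 else -1)"

lemma vS_cf: "vS n S = cf (map (\<lambda>i. (c0 S i, c1 S i)) [1..<n+1])"
proof -
  have "map (\<lambda>i. if i \<in> S then ab_b else ab_minus ab_a ab_b) [1..<n+1]
      = map (\<lambda>(a,b). lp a b) (map (\<lambda>i. (c0 S i, c1 S i)) [1..<n+1])"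
    by (simp only: map_map, rule map_cong[OF refl]) (simp add: c0_def c1_def ab_b_lp ab_amb_lp)
  then show ?thesis unfolding vS_def by (simp only: ab_prod_lp)
qed

lemma prodl_upt: "prodl k (map (\<lambda>i. (c0 S i, c1 S i)) [Suc k..<Suc k + len])
   = (\<Prod>i=Suc k..k+len. if i \<in> S then qq^i else 1 - qq^i)"
proof (induct len arbitrary: k)
  case 0 then show ?case by simp
next
  case (Suc len)
  have u: "[Suc k..<Suc k + Suc len] = Suc k # [Suc (Suc k)..<Suc (Suc k) + len]"
    by (simp add: upt_conv_Cons)
  have p: "(\<Prod>i=Suc k..k+Suc len. if i \<in> S then qq^i else 1 - qq^i)
     = (if Suc k \<in> S then qq^Suc k else 1 - qq^Suc k) * (\<Prod>i=Suc (Suc k)..Suc k+len. if i \<in> S then qq^i else 1 - qq^i)"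
    by (subst prod.atLeast_Suc_atMost) auto
  show ?case unfolding u p using Suc[of "Suc k"]
    by (auto simp: c0_def c1_def)
qed

lemma Theta_vS: "Theta (vS n S) = W n S"
proof -
  have "Theta (vS n S) = (\<Sum>w\<in>{w. length w = n}. smult (vS n S w) (qq ^ exw 0 w))"
    by (rule Theta_finite) (use cf_len in \<open>auto simp: fin_len vS_cf\<close>)
  also have "\<dots> = prodl 0 (map (\<lambda>i. (c0 S i, c1 S i)) [1..<n+1])"
    using theta_sum[where ps="map (\<lambda>i. (c0 S i, c1 S i)) [1..<n+1]" and k=0] by (simp del: upt.simps add: vS_cf)
  also have "\<dots> = W n S"
    using prodl_upt[of 0 S n] by (simp add: W_def)
  finally show ?thesis .
qed

lemma vS_len: "length w \<noteq> n \<Longrightarrow> vS n S w = 0"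
  using cf_len by (force simp: vS_cf)

lemma smult_sum_right: "smult a (\<Sum>x\<in>A. f x) = (\<Sum>x\<in>A. smult a (f x))"
  by (induct A rule: infinite_finite_induct) (auto simp: smult_add_right)

lemma Theta_abindex:
  "Theta (abindex X le zero one rho n) = (\<Sum>S\<in>Pow {1..n}. of_nat (flag_f X le zero one rho S) * W n S)"
proof -
  let ?A = "{w::bool list. length w = n}"
  have "Theta (abindex X le zero one rho n) = (\<Sum>w\<in>?A. smult (abindex X le zero one rho n w) (qq ^ exw 0 w))"
  proof (rule Theta_finite)
    have "length w \<noteq> n \<Longrightarrow> abindex X le zero one rho n w = 0" for w
      by (simp add: abindex_def vS_len)
    then show "{w. abindex X le zero one rho n w \<noteq> 0} \<subseteq> ?A" by blast
  qed (simp add: fin_len)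
  also have "\<dots> = (\<Sum>w\<in>?A. \<Sum>S\<in>Pow {1..n}. smult (int (flag_f X le zero one rho S)) (smult (vS n S w) (qq ^ exw 0 w)))"
    by (simp add: abindex_def smult_sum)
  also have "\<dots> = (\<Sum>S\<in>Pow {1..n}. smult (int (flag_f X le zero one rho S)) (\<Sum>w\<in>?A. smult (vS n S w) (qq ^ exw 0 w)))"
    by (subst sum.swap) (simp add: smult_sum_right)
  also have "\<dots> = (\<Sum>S\<in>Pow {1..n}. of_nat (flag_f X le zero one rho S) * W n S)"
  proof (rule sum.cong[OF refl])
    fix S
    have "Theta (vS n S) = (\<Sum>w\<in>?A. smult (vS n S w) (qq ^ exw 0 w))"
    proof (rule Theta_finite)
      show "{w. vS n S w \<noteq> 0} \<subseteq> ?A" using vS_len by (metis (mono_tags, lifting) mem_Collect_eq subsetI)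
    qed (simp add: fin_len)
    then show "smult (int (flag_f X le zero one rho S)) (\<Sum>w\<in>?A. smult (vS n S w) (qq ^ exw 0 w))
        = of_nat (flag_f X le zero one rho S) * W n S"
      by (simp add: Theta_vS[symmetric] of_nat_poly)
  qed
  finally show ?thesis .
qed



definition chainsets :: "'b set \<Rightarrow> nat set \<Rightarrow> 'b set set set" where
  "chainsets A T = {C. C \<subseteq> Pow A \<and> (\<forall>x\<in>C. \<forall>y\<in>C. x \<subseteq> y \<or> y \<subseteq> x) \<and> card ` C = T \<and> card C = card T}"

lemma chainsets_empty: "chainsets A {} = {{}}"
  by (auto simp: chainsets_def)

lemma finite_chainsets: "finite A \<Longrightarrow> finite (chainsets A T)"
  by (rule finite_subset[of _ "Pow (Pow A)"]) (auto simp: chainsets_def)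

lemma chainsets_insert:
  assumes A: "finite A" and T: "finite T" and lt: "\<forall>t\<in>T. t < j"
  shows "chainsets A (insert j T) = (\<Union>B\<in>{B. B \<subseteq> A \<and> card B = j}. insert B ` chainsets B T)"
proof (rule set_eqI, rule iffI)
  fix C assume C: "C \<in> chainsets A (insert j T)"
  have jT: "j \<notin> T" using lt by auto
  have CA: "C \<subseteq> Pow A" using C by (simp add: chainsets_def)
  have finC: "finite C" using finite_subset[OF CA] A by simp
  have injC: "inj_on card C"
    using C finC by (intro eq_card_imp_inj_on) (simp_all add: chainsets_def)
  have "j \<in> card ` C" using C by (simp add: chainsets_def)
  then obtain B where B: "B \<in> C" "card B = j" by blast
  define D where "D = C - {B}"
  have CD: "C = insert B D" using B D_def by auto
  have BA: "B \<subseteq> A" using CA B by blast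
  have cardD: "card ` D = T"
  proof -
    have "card ` D = card ` C - card ` {B}"
      unfolding D_def by (rule inj_on_image_set_diff[OF injC]) (use B in auto)
    also have "\<dots> = T" using C B jT by (simp add: chainsets_def)
    finally show ?thesis .
  qed
  have DB: "D \<subseteq> Pow B"
  proof
    fix y assume y: "y \<in> D"
    then have yC: "y \<in> C" "y \<noteq> B" using D_def by auto
    have "y \<subseteq> B \<or> B \<subseteq> y" using C yC B by (simp add: chainsets_def)
    moreover have "\<not> B \<subset> y"
    proof
      assume "B \<subset> y"
      moreover have "y \<subseteq> A" using yC CA by blast
      then have "finite y" using A by (rule finite_subset)
      ultimately have "card B < card y" by (rule psubset_card_mono[rotated])
      moreover have "card y \<in> T" using cardD y by auto
      ultimately show False using lt B by auto
    qed
    ultimately show "y \<in> Pow B" using yC by auto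
  qed
  have "card D = card T"
  proof -
    have nB: "B \<notin> D" "finite D" using D_def finC by auto
    have "card C = Suc (card D)" using nB CD by (metis card_insert_disjoint)
    moreover have "card C = Suc (card T)" using C jT T by (simp add: chainsets_def)
    ultimately show ?thesis by simp
  qed
  moreover have "\<forall>x\<in>D. \<forall>y\<in>D. x \<subseteq> y \<or> y \<subseteq> x" using C D_def by (simp add: chainsets_def)
  ultimately have "D \<in> chainsets B T" using DB cardD by (simp add: chainsets_def)
  then show "C \<in> (\<Union>B\<in>{B. B \<subseteq> A \<and> card B = j}. insert B ` chainsets B T)"
    using CD BA B by auto
next
  fix C assume "C \<in> (\<Union>B\<in>{B. B \<subseteq> A \<and> card B = j}. insert B ` chainsets B T)"
  then obtain B D where B: "B \<subseteq> A" "card B = j" and D: "D \<in> chainsets B T" and CD: "C = insert B D"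
    by auto
  have jT: "j \<notin> T" using lt by auto
  have BD: "B \<notin> D"
  proof
    assume "B \<in> D"
    then have "card B \<in> card ` D" by blast
    then show False using D B jT by (simp add: chainsets_def)
  qed
  have finB: "finite B" using B(1) A by (rule finite_subset)
  have "D \<subseteq> Pow B" using D by (simp add: chainsets_def)
  then have finD: "finite D" using finB by (simp add: finite_subset[of D "Pow B"])
  have DB: "D \<subseteq> Pow B" and ch: "\<forall>x\<in>D. \<forall>y\<in>D. x \<subseteq> y \<or> y \<subseteq> x"
    and cD: "card ` D = T" "card D = card T" using D by (simp_all add: chainsets_def)
  have "insert B D \<subseteq> Pow A" using DB B by blast
  moreover have "\<forall>x\<in>insert B D. \<forall>y\<in>insert B D. x \<subseteq> y \<or> y \<subseteq> x" using ch DB by blast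
  moreover have "card ` insert B D = insert j T" using cD B by simp
  moreover have "card (insert B D) = card (insert j T)" using cD BD finD jT T by simp
  ultimately show "C \<in> chainsets A (insert j T)" unfolding CD chainsets_def by blast
qed

lemma card_chainsets:
  assumes "finite T"
  shows "\<forall>A::'b set. finite A \<longrightarrow> card (chainsets A T) = Nrec (card A) T"
  using assms
proof (induct T rule: finite_linorder_max_induct)
  case empty
  then show ?case by (simp add: chainsets_empty)
next
  case (insert j T)
  show ?case
  proof (intro allI impI)
    fix A :: "'b set" assume A: "finite A"
    let ?I = "{B. B \<subseteq> A \<and> card B = j}"
    have fin: "finite ?I" by (rule finite_subset[of _ "Pow A"]) (use A in auto)
    have "card (chainsets A (insert j T)) = card (\<Union>B\<in>?I. insert B ` chainsets B T)"
      by (simp only: chainsets_insert[OF A insert(1) insert(2)])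
    also have "\<dots> = (\<Sum>B\<in>?I. card (insert B ` chainsets B T))"
    proof (rule card_UN_disjoint[OF fin])
      show "\<forall>B\<in>?I. finite (insert B ` chainsets B T)"
      proof
        fix B assume "B \<in> ?I"
        then have "B \<subseteq> A" by simp
        then have "finite B" using A by (rule finite_subset)
        then show "finite (insert B ` chainsets B T)" by (simp add: finite_chainsets)
      qed
      show "\<forall>B1\<in>?I. \<forall>B2\<in>?I. B1 \<noteq> B2 \<longrightarrow> insert B1 ` chainsets B1 T \<inter> insert B2 ` chainsets B2 T = {}"
      proof (intro ballI impI)
        fix B1 B2 assume B1: "B1 \<in> ?I" and B2: "B2 \<in> ?I" and ne: "B1 \<noteq> B2"
        show "insert B1 ` chainsets B1 T \<inter> insert B2 ` chainsets B2 T = {}"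
        proof (rule ccontr)
          assume "insert B1 ` chainsets B1 T \<inter> insert B2 ` chainsets B2 T \<noteq> {}"
          then obtain D1 D2 where D2: "D2 \<in> chainsets B2 T" and eq: "insert B1 D1 = insert B2 D2" by blast
          then have "B1 \<in> D2" using ne by blast
          then have "card B1 \<in> card ` D2" by blast
          then have "card B1 \<in> T" using D2 by (simp add: chainsets_def)
          then show False using B1 insert(2) by auto
        qed
      qed
    qed
    also have "\<dots> = (\<Sum>B\<in>?I. Nrec j T)"
    proof (rule sum.cong[OF refl])
      fix B assume B: "B \<in> ?I"
      have "inj_on (insert B) (chainsets B T)"
      proof (rule inj_onI)
        fix D1 D2 assume D1: "D1 \<in> chainsets B T" and D2: "D2 \<in> chainsets B T" and eq: "insert B D1 = insert B D2"
        have nB: "B \<notin> D" if "D \<in> chainsets B T" for D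
        proof
          assume "B \<in> D"
          then have "card B \<in> card ` D" by blast
          then have "card B \<in> T" using that by (simp add: chainsets_def)
          then show False using B insert(2) by auto
        qed
        have "B \<notin> D1" "B \<notin> D2" by (rule nB[OF D1], rule nB[OF D2])
        then show "D1 = D2" using eq by (metis insert_ident)
      qed
      then have "card (insert B ` chainsets B T) = card (chainsets B T)" by (rule card_image)
      also have "\<dots> = Nrec j T"
      proof -
        have "B \<subseteq> A" using B by simp
        then have "finite B" using A by (rule finite_subset)
        then have "card (chainsets B T) = Nrec (card B) T" using spec[OF insert(3), of B] by simp
        then show ?thesis using B by simp
      qed
      finally show "card (insert B ` chainsets B T) = Nrec j T" .
    qed
    also have "\<dots> = (card A choose j) * Nrec j T" by (simp only: sum_constant n_subsets[OF A] of_nat_id)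
    also have "\<dots> = Nrec (card A) (insert j T)"
      by (simp only: Nrec_insert[OF insert(1) insert(2)])
    finally show "card (chainsets A (insert j T)) = Nrec (card A) (insert j T)" .
  qed
qed



context
  fixes X :: "'a set" and le :: "'a \<Rightarrow> 'a \<Rightarrow> bool" and zero one :: 'a
    and rho :: "'a \<Rightarrow> nat" and n :: nat
  assumes SP: "simplicial_poset X le zero one rho n"
begin

lemma GP: "graded_poset X le zero one rho n"
  using SP unfolding simplicial_poset_def by (elim conjE) assumption

lemma PO: "poset_on X le"
  using GP unfolding graded_poset_def by (elim conjE) assumption

lemma GP': "finite X \<and> poset_on X le \<and> zero \<in> X \<and> one \<in> X \<and>
     (\<forall>x\<in>X. le zero x \<and> le x one) \<and>
     rho zero = 0 \<and> rho one = n + 1 \<and>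
     (\<forall>x y. covers X le x y \<longrightarrow> rho y = rho x + 1)"
  using GP unfolding graded_poset_def by assumption

lemma finX: "finite X" using GP' by (elim conjE) assumption
lemma zX: "zero \<in> X" using GP' by (elim conjE) assumption
lemma oX: "one \<in> X" using GP' by (elim conjE) assumption
lemma rz: "rho zero = 0" using GP' by (elim conjE) assumption
lemma ro: "rho one = n + 1" using GP' by (elim conjE) assumption
lemma zle: "x \<in> X \<Longrightarrow> le zero x"
proof -
  assume x: "x \<in> X"
  have "\<forall>x\<in>X. le zero x \<and> le x one" using GP' by (elim conjE) assumption
  then show ?thesis using x by blast
qed
lemma leo: "x \<in> X \<Longrightarrow> le x one"
proof -
  assume x: "x \<in> X"
  have "\<forall>x\<in>X. le zero x \<and> le x one" using GP' by (elim conjE) assumption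
  then show ?thesis using x by blast
qed
lemma reflX: "x \<in> X \<Longrightarrow> le x x"
proof -
  assume x: "x \<in> X"
  have "\<forall>x\<in>X. le x x" using PO unfolding poset_on_def by (elim conjE) assumption
  then show ?thesis using x by blast
qed
lemma trans: "x \<in> X \<Longrightarrow> y \<in> X \<Longrightarrow> z \<in> X \<Longrightarrow> le x y \<Longrightarrow> le y z \<Longrightarrow> le x z"
proof -
  assume a: "x \<in> X" "y \<in> X" "z \<in> X" "le x y" "le y z"
  have "\<forall>x\<in>X. \<forall>y\<in>X. \<forall>z\<in>X. le x y \<and> le y z \<longrightarrow> le x z" using PO unfolding poset_on_def by (elim conjE) assumption
  then show "le x z" using a by blast
qed
lemma cov: "covers X le x y \<Longrightarrow> rho y = rho x + 1"
proof -
  assume a: "covers X le x y"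
  have "\<forall>x y. covers X le x y \<longrightarrow> rho y = rho x + 1" using GP' by (elim conjE) assumption
  then show ?thesis using a by blast
qed
lemma bool: "x \<in> X \<Longrightarrow> x \<noteq> one \<Longrightarrow> boolean_interval X le zero x (rho x)"
proof -
  assume x: "x \<in> X" "x \<noteq> one"
  have "\<forall>x\<in>X. x \<noteq> one \<longrightarrow> boolean_interval X le zero x (rho x)"
    using SP unfolding simplicial_poset_def by (elim conjE) assumption
  then show ?thesis using x by blast
qed

lemma rank_card:
  fixes k :: nat
  assumes x: "x \<in> X"
    and f: "bij_betw f (interval_below X le zero x) (Pow {..<k})"
    and iso: "\<forall>y\<in>interval_below X le zero x. \<forall>z\<in>interval_below X le zero x. le y z \<longleftrightarrow> f y \<subseteq> f z"
  shows "y \<in> interval_below X le zero x \<Longrightarrow> rho y = card (f y)"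
proof (induct "card (f y)" arbitrary: y rule: less_induct)
  case less
  let ?I = "interval_below X le zero x"
  have yX: "y \<in> X" and yx: "le y x" using less(2) by (auto simp: interval_below_def)
  have zI: "zero \<in> ?I" using zX x zle by (auto simp: interval_below_def)
  have injf: "inj_on f ?I" using f by (simp add: bij_betw_def)
  have fy: "f y \<subseteq> {..<k}" using f less(2) by (auto simp: bij_betw_def)
  have finfy: "finite (f y)" using fy by (rule finite_subset) simp
  show ?case
  proof (cases "f y = {}")
    case True
    have "le zero y" using zle[OF yX] .
    then have "f zero \<subseteq> f y" using iso[rule_format, OF zI less(2)] by simp
    then have "f zero = f y" using True by simp
    then have "zero = y" using inj_onD[OF injf _ zI less(2)] by blast
    then show ?thesis using True rz by simp
  next
    case False
    then obtain b where b: "b \<in> f y" by blast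
    have "f y - {b} \<in> Pow {..<k}" using fy by auto
    moreover have "f ` ?I = Pow {..<k}" using f by (simp add: bij_betw_def)
    ultimately have "f y - {b} \<in> f ` ?I" by simp
    then obtain z where zI': "z \<in> ?I" and fz: "f z = f y - {b}"
      by (metis imageE)
    have cz: "card (f z) < card (f y)" unfolding fz using b finfy by (rule card_Diff1_less[rotated])
    have IH: "rho z = card (f z)" using less(1)[OF cz zI'] .
    have zX: "z \<in> X" using zI' by (auto simp: interval_below_def)
    have "f z \<subseteq> f y" unfolding fz by (rule Diff_subset)
    then have lezy: "le z y" using iso[rule_format, OF zI' less(2)] by simp
    have zy: "z \<noteq> y" using fz b by auto
    have "covers X le z y"
      unfolding covers_def
    proof (intro conjI)
      show "\<not> (\<exists>w\<in>X. le z w \<and> le w y \<and> w \<noteq> z \<and> w \<noteq> y)"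
      proof
        assume "\<exists>w\<in>X. le z w \<and> le w y \<and> w \<noteq> z \<and> w \<noteq> y"
        then obtain w where w: "w \<in> X" "le z w" "le w y" "w \<noteq> z" "w \<noteq> y" by blast
        have "le w x" using trans[OF w(1) yX x w(3) yx] .
        then have wI: "w \<in> ?I" using w(1) zle[OF w(1)] by (simp add: interval_below_def)
        have "f z \<subseteq> f w" using iso[rule_format, OF zI' wI] w(2) by simp
        have "f w \<subseteq> f y" using iso[rule_format, OF wI less(2)] w(3) by simp
        have "f w \<noteq> f z" using inj_onD[OF injf _ wI zI'] w(4) by blast
        have "f w \<noteq> f y" using inj_onD[OF injf _ wI less(2)] w(5) by blast
        show False
        proof (cases "b \<in> f w")
          case True
          then have "f y \<subseteq> f w" using \<open>f z \<subseteq> f w\<close> unfolding fz by blast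
          then show False using \<open>f w \<subseteq> f y\<close> \<open>f w \<noteq> f y\<close> by blast
        next
          case False
          then have "f w \<subseteq> f z" using \<open>f w \<subseteq> f y\<close> unfolding fz by blast
          then show False using \<open>f z \<subseteq> f w\<close> \<open>f w \<noteq> f z\<close> by blast
        qed
      qed
    qed (use zX yX lezy zy in auto)
    then have "rho y = rho z + 1" by (rule cov)
    also have "\<dots> = card (f y)"
    proof -
      have "card (f y) > 0" using b finfy card_gt_0_iff by blast
      then show ?thesis using IH fz b finfy by (simp add: card_Diff_singleton)
    qed
    finally show ?thesis .
  qed
qed

lemma rho_less:
  assumes a: "a \<in> X" and b: "b \<in> X" "b \<noteq> one" and ab: "le a b" "a \<noteq> b"
  shows "rho a < rho b"
proof -
  obtain f where f: "bij_betw f (interval_below X le zero b) (Pow {..<rho b})"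
    and iso: "\<forall>y\<in>interval_below X le zero b. \<forall>z\<in>interval_below X le zero b. le y z \<longleftrightarrow> f y \<subseteq> f z"
    using bool[OF b] unfolding boolean_interval_def by blast
  have aI: "a \<in> interval_below X le zero b" using a ab zle by (simp add: interval_below_def)
  have bI: "b \<in> interval_below X le zero b" using b zle reflX by (simp add: interval_below_def)
  have "f a \<subseteq> f b" using iso aI bI ab by blast
  moreover have "f a \<noteq> f b" using f aI bI ab by (metis bij_betw_def inj_onD)
  moreover have "f b \<subseteq> {..<rho b}" using f bI by (meson PowD bij_betwE)
  then have "finite (f b)" by (rule finite_subset) simp
  ultimately have "card (f a) < card (f b)" by (simp add: psubset_card_mono)
  then show ?thesis using rank_card[OF b(1) f iso aI] rank_card[OF b(1) f iso bI] by simp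
qed

definition Ch :: "nat set \<Rightarrow> 'a set set" where
  "Ch S = {C. C \<subseteq> X - {zero, one} \<and> (\<forall>x\<in>C. \<forall>y\<in>C. le x y \<or> le y x) \<and> rho ` C = S \<and> card C = card S}"

lemma flag_Ch: "flag_f X le zero one rho S = card (Ch S)"
  by (simp add: flag_f_def Ch_def)

lemma finite_Ch: "finite (Ch S)"
  by (rule finite_subset[of _ "Pow X"]) (use finX in \<open>auto simp: Ch_def\<close>)

lemma flag_empty: "flag_f X le zero one rho {} = 1"
proof -
  have "Ch {} = {{}}" by (auto simp: Ch_def)
  then show ?thesis by (simp add: flag_Ch)
qed

lemma Ch_finite_el: "C \<in> Ch S \<Longrightarrow> finite C"
proof -
  assume "C \<in> Ch S"
  then have "C \<subseteq> X" by (auto simp: Ch_def)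
  then show "finite C" using finX by (rule finite_subset)
qed

lemma Dx_card:
  assumes x: "x \<in> X" "rho x = k" and k: "1 \<le> k" "k \<le> n" and T: "T \<subseteq> {1..<k}"
  shows "card {D \<in> Ch T. \<forall>d\<in>D. le d x} = Nrec k T"
proof -
  let ?I = "interval_below X le zero x"
  let ?D = "{D \<in> Ch T. \<forall>d\<in>D. le d x}"
  have xo: "x \<noteq> one" using x k ro by auto
  obtain f where f: "bij_betw f ?I (Pow {..<k})"
    and iso: "\<forall>y\<in>?I. \<forall>z\<in>?I. le y z \<longleftrightarrow> f y \<subseteq> f z"
    using bool[OF x(1) xo] x(2) unfolding boolean_interval_def by blast
  have rc: "\<And>y. y \<in> ?I \<Longrightarrow> rho y = card (f y)" using rank_card[OF x(1) f iso] by blast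
  define h where "h = inv_into ?I f"
  have hf: "\<And>a. a \<in> ?I \<Longrightarrow> h (f a) = a" using f unfolding h_def by (simp add: bij_betw_def)
  have fh: "\<And>e. e \<in> Pow {..<k} \<Longrightarrow> f (h e) = e" using f unfolding h_def by (meson bij_betw_inv_into_right)
  have hI: "\<And>e. e \<in> Pow {..<k} \<Longrightarrow> h e \<in> ?I" using f unfolding h_def by (metis bij_betw_imp_surj_on inv_into_into)
  have fP: "\<And>a. a \<in> ?I \<Longrightarrow> f a \<in> Pow {..<k}" using f by (meson bij_betwE)
  have injf: "inj_on f ?I" using f by (simp add: bij_betw_def)
  have injh: "inj_on h (Pow {..<k})" by (metis fh inj_onI)
  have DI: "\<And>D. D \<in> ?D \<Longrightarrow> D \<subseteq> ?I" using zle by (auto simp: Ch_def interval_below_def)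
  have finT: "finite T" using T by (rule finite_subset) simp
  have "bij_betw (image f) ?D (chainsets {..<k} T)"
  proof (rule bij_betw_byWitness[where f' = "image h"])
    show "\<forall>D\<in>?D. h ` f ` D = D"
    proof
      fix D assume "D \<in> ?D"
      then have DI2: "D \<subseteq> ?I" by (rule DI)
      have "h ` f ` D = (\<lambda>a. a) ` D" unfolding image_image by (rule image_cong[OF refl]) (use hf DI2 in blast)
      then show "h ` f ` D = D" by simp
    qed
    show "\<forall>E\<in>chainsets {..<k} T. f ` h ` E = E"
    proof
      fix E assume "E \<in> chainsets {..<k} T"
      then have EP2: "E \<subseteq> Pow {..<k}" by (simp add: chainsets_def)
      have "f ` h ` E = (\<lambda>a. a) ` E" unfolding image_image by (rule image_cong[OF refl]) (use fh EP2 in blast)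
      then show "f ` h ` E = E" by simp
    qed
    show "image f ` ?D \<subseteq> chainsets {..<k} T"
    proof
      fix E assume "E \<in> image f ` ?D"
      then obtain D where D: "D \<in> ?D" and E: "E = f ` D" by blast
      have DI': "D \<subseteq> ?I" using D by (rule DI)
      have ch: "\<forall>a\<in>D. \<forall>b\<in>D. le a b \<or> le b a" and rD: "rho ` D = T" "card D = card T"
        using D by (simp_all add: Ch_def)
      have "E \<subseteq> Pow {..<k}" using E DI' fP by blast
      moreover have "\<forall>a\<in>E. \<forall>b\<in>E. a \<subseteq> b \<or> b \<subseteq> a"
        using ch iso DI' unfolding E by blast
      moreover have "card ` E = T"
      proof -
        have "card ` E = (\<lambda>d. card (f d)) ` D" unfolding E by (simp add: image_image)
        also have "\<dots> = rho ` D" by (rule image_cong[OF refl]) (use rc DI' in force)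
        finally show ?thesis using rD by simp
      qed
      moreover have "card E = card T"
        unfolding E using card_image[OF inj_on_subset[OF injf DI']] rD by simp
      ultimately show "E \<in> chainsets {..<k} T" by (simp add: chainsets_def)
    qed
    show "image h ` chainsets {..<k} T \<subseteq> ?D"
    proof
      fix D assume "D \<in> image h ` chainsets {..<k} T"
      then obtain E where E: "E \<in> chainsets {..<k} T" and D: "D = h ` E" by blast
      have EP: "E \<subseteq> Pow {..<k}" and ch: "\<forall>a\<in>E. \<forall>b\<in>E. a \<subseteq> b \<or> b \<subseteq> a"
        and cE: "card ` E = T" "card E = card T" using E by (simp_all add: chainsets_def)
      have DI': "D \<subseteq> ?I" using EP hI D by blast
      have rhoh: "rho (h e) = card e" if "e \<in> E" for e
      proof -
        have "e \<in> Pow {..<k}" using EP that by blast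
        then show ?thesis using rc[OF hI] fh by simp
      qed
      have rD: "rho ` D = T"
      proof -
        have "rho ` D = (\<lambda>e. rho (h e)) ` E" unfolding D by (simp add: image_image)
        also have "\<dots> = card ` E" using rhoh by (rule image_cong[OF refl])
        finally show ?thesis using cE by simp
      qed
      have "D \<subseteq> X - {zero, one}"
      proof
        fix d assume d: "d \<in> D"
        then have "d \<in> X" using DI' by (auto simp: interval_below_def)
        moreover have "rho d \<in> T" using rD d by blast
        then have "rho d \<noteq> 0" "rho d \<noteq> n + 1" using T k by auto
        ultimately show "d \<in> X - {zero, one}" using rz ro by auto
      qed
      moreover have "\<forall>a\<in>D. \<forall>b\<in>D. le a b \<or> le b a"
      proof (intro ballI)
        fix a b assume "a \<in> D" "b \<in> D"
        then obtain ea eb where ea: "ea \<in> E" "a = h ea" and eb: "eb \<in> E" "b = h eb" using D by blast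
        have "f a = ea" "f b = eb" using ea eb fh EP by auto
        moreover have "a \<in> ?I" "b \<in> ?I" using ea eb hI EP by auto
        moreover have "ea \<subseteq> eb \<or> eb \<subseteq> ea" using ch ea eb by blast
        ultimately show "le a b \<or> le b a" using iso by blast
      qed
      moreover have "card D = card T"
        unfolding D using card_image[OF inj_on_subset[OF injh EP]] cE by simp
      moreover have "\<forall>d\<in>D. le d x" using DI' by (auto simp: interval_below_def)
      ultimately show "D \<in> ?D" using rD by (simp add: Ch_def)
    qed
  qed
  then have "card ?D = card (chainsets {..<k} T)" by (rule bij_betw_same_card)
  also have "\<dots> = Nrec k T" using spec[OF card_chainsets[OF finT], of "{..<k}"] by simp
  finally show ?thesis .
qed

lemma flag_insert:
  assumes k: "1 \<le> k" "k \<le> n" and T: "T \<subseteq> {1..<k}"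
  shows "flag_f X le zero one rho (insert k T) = fvec X rho k * Nrec k T"
proof -
  let ?Xk = "{x \<in> X. rho x = k}"
  let ?D = "\<lambda>x. {D \<in> Ch T. \<forall>d\<in>D. le d x}"
  have kT: "k \<notin> T" using T by auto
  have finT: "finite T" using T by (rule finite_subset) simp
  have eq: "Ch (insert k T) = (\<Union>x\<in>?Xk. insert x ` ?D x)"
  proof (rule set_eqI, rule iffI)
    fix C assume C: "C \<in> Ch (insert k T)"
    have CX: "C \<subseteq> X - {zero, one}" and ch: "\<forall>a\<in>C. \<forall>b\<in>C. le a b \<or> le b a"
      and rC: "rho ` C = insert k T" "card C = card (insert k T)" using C by (simp_all add: Ch_def)
    have finC: "finite C" using C by (rule Ch_finite_el)
    have injC: "inj_on rho C" using rC finC by (intro eq_card_imp_inj_on) simp_all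
    have "k \<in> rho ` C" using rC by simp
    then obtain x where x: "x \<in> C" "rho x = k" by blast
    define D where "D = C - {x}"
    have CD: "C = insert x D" using x D_def by auto
    have rD: "rho ` D = T"
    proof -
      have "rho ` D = rho ` C - rho ` {x}"
        unfolding D_def by (rule inj_on_image_set_diff[OF injC]) (use x in auto)
      also have "\<dots> = T" using rC x kT by simp
      finally show ?thesis .
    qed
    have nx: "x \<notin> D" "finite D" using D_def finC by auto
    have cD: "card D = card T"
    proof -
      have "card C = Suc (card D)" using nx CD by (metis card_insert_disjoint)
      then show ?thesis using rC kT finT by simp
    qed
    have Dle: "\<forall>d\<in>D. le d x"
    proof
      fix d assume d: "d \<in> D"
      have dC: "d \<in> C" "d \<noteq> x" using d D_def by auto
      have "rho d \<in> T" using rD d by blast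
      then have rdk: "rho d < k" using T by auto
      show "le d x"
      proof (rule ccontr)
        assume "\<not> le d x"
        then have "le x d" using ch dC x by blast
        moreover have "x \<in> X" "d \<in> X" "d \<noteq> one" using CX x dC by auto
        ultimately have "rho x < rho d" using dC(2) by (intro rho_less) auto
        then show False using rdk x by simp
      qed
    qed
    have "D \<in> Ch T" using CX ch rD cD unfolding Ch_def D_def by auto
    then show "C \<in> (\<Union>x\<in>?Xk. insert x ` ?D x)" using CD Dle x CX by blast
  next
    fix C assume "C \<in> (\<Union>x\<in>?Xk. insert x ` ?D x)"
    then obtain x D where x: "x \<in> X" "rho x = k" and D: "D \<in> Ch T" "\<forall>d\<in>D. le d x" and CD: "C = insert x D"
      by blast
    have DX: "D \<subseteq> X - {zero, one}" and ch: "\<forall>a\<in>D. \<forall>b\<in>D. le a b \<or> le b a"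
      and rD: "rho ` D = T" "card D = card T" using D by (simp_all add: Ch_def)
    have finD: "finite D" using D(1) by (rule Ch_finite_el)
    have xD: "x \<notin> D"
    proof
      assume "x \<in> D"
      then have "rho x \<in> T" using rD by blast
      then show False using x kT by simp
    qed
    have "x \<noteq> zero" "x \<noteq> one" using x k rz ro by auto
    then have "C \<subseteq> X - {zero, one}" using DX x CD by blast
    moreover have "\<forall>a\<in>C. \<forall>b\<in>C. le a b \<or> le b a" using ch D(2) reflX x(1) CD by blast
    moreover have "rho ` C = insert k T" using rD x CD by simp
    moreover have "card C = card (insert k T)" using CD xD finD rD kT finT by simp
    ultimately show "C \<in> Ch (insert k T)" by (simp add: Ch_def)
  qed
  have "card (Ch (insert k T)) = (\<Sum>x\<in>?Xk. card (insert x ` ?D x))"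
    unfolding eq
  proof (rule card_UN_disjoint)
    show "finite ?Xk" using finX by simp
    show "\<forall>x\<in>?Xk. finite (insert x ` ?D x)" using finite_Ch by simp
    show "\<forall>x1\<in>?Xk. \<forall>x2\<in>?Xk. x1 \<noteq> x2 \<longrightarrow> insert x1 ` ?D x1 \<inter> insert x2 ` ?D x2 = {}"
    proof (intro ballI impI)
      fix x1 x2 assume x1: "x1 \<in> ?Xk" and x2: "x2 \<in> ?Xk" and ne: "x1 \<noteq> x2"
      show "insert x1 ` ?D x1 \<inter> insert x2 ` ?D x2 = {}"
      proof (rule ccontr)
        assume "insert x1 ` ?D x1 \<inter> insert x2 ` ?D x2 \<noteq> {}"
        then obtain D1 D2 where D2: "D2 \<in> Ch T" and e: "insert x1 D1 = insert x2 D2" by blast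
        then have "x1 \<in> D2" using ne by blast
        then have "rho x1 \<in> T" using D2 by (auto simp: Ch_def)
        then show False using x1 kT by simp
      qed
    qed
  qed
  also have "\<dots> = (\<Sum>x\<in>?Xk. Nrec k T)"
  proof (rule sum.cong[OF refl])
    fix x assume x: "x \<in> ?Xk"
    have "inj_on (insert x) (?D x)"
    proof (rule inj_onI)
      fix D1 D2 assume D1: "D1 \<in> ?D x" and D2: "D2 \<in> ?D x" and e: "insert x D1 = insert x D2"
      have "x \<notin> D1"
      proof
        assume "x \<in> D1" then have "rho x \<in> T" using D1 by (auto simp: Ch_def)
        then show False using x kT by simp
      qed
      moreover have "x \<notin> D2"
      proof
        assume "x \<in> D2" then have "rho x \<in> T" using D2 by (auto simp: Ch_def)
        then show False using x kT by simp
      qed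
      ultimately show "D1 = D2" using e by (metis insert_ident)
    qed
    then have "card (insert x ` ?D x) = card (?D x)" by (rule card_image)
    also have "\<dots> = Nrec k T" using Dx_card[of x k T] x k T by simp
    finally show "card (insert x ` ?D x) = Nrec k T" .
  qed
  also have "\<dots> = fvec X rho k * Nrec k T" using k by (simp add: fvec_def)
  finally show ?thesis by (simp add: flag_Ch)
qed

end

theorem mainTheorem3:
  fixes X :: "'a set" and le :: "'a \<Rightarrow> 'a \<Rightarrow> bool" and zero one :: 'a
    and rho :: "'a \<Rightarrow> nat" and n :: nat
  assumes "simplicial_poset X le zero one rho n"
  shows "Theta (abindex X le zero one rho n) = qfact n * hpoly X rho n"
proof -
  have "Theta (abindex X le zero one rho n) = (\<Sum>S\<in>Pow {1..n}. of_nat (flag_f X le zero one rho S) * W n S)"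
    by (rule Theta_abindex)
  also have "\<dots> = qfact n * (\<Sum>i=0..n. of_nat (fvec X rho i) * qq^i * [:1,-1:]^(n-i))"
  proof (rule R[where M=n])
    show "flag_f X le zero one rho {} = 1" using flag_empty[OF assms] .
    show "fvec X rho 0 = 1" by (simp add: fvec_def)
    show "\<And>j T. 1 \<le> j \<Longrightarrow> j \<le> n \<Longrightarrow> T \<subseteq> {1..<j} \<Longrightarrow>
        flag_f X le zero one rho (insert j T) = fvec X rho j * Nrec j T"
      by (rule flag_insert[OF assms])
    show "\<And>j. j < n \<Longrightarrow> (\<Sum>T\<in>Pow {1..j}. of_nat (Nrec (Suc j) T) * W j T) = qfact (Suc j)"
      by (rule g_eq)
  qed (rule order_refl)
  also have "\<dots> = qfact n * hpoly X rho n" by (simp only: hpoly_def qq_def)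
  finally show ?thesis .
qed

end
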